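(* Let $H\in\mathbb{R}^{n\times d}$, $\Sigma\in\mathbb{R}^{n\times n}$ symmetric positive definite, $y\in\mathbb{R}^n$, $J\ge2$, and let $v_i^{(j)}$ be deterministic EKI iterates $$v_{i+1}^{(j)}=v_i^{(j)}+\Gamma_iH^\top(H\Gamma_iH^\top+\Sigma)^{-1}(y-Hv_i^{(j)}),$$ with $\Gamma_i$ the empirical ensemble covariance. Let $v^*=(H^\top\Sigma^{-1}H)^\dagger H^\top\Sigma^{-1}y$ and $\omega_i^{(j)}=v_i^{(j)}-v^*$. Then for all $i\ge0$, $\omega_{i+1}^{(j)}=\mathbb{M}_i\omega_i^{(j)}$ with $\mathbb{M}_i=(I+\Gamma_iH^\top\Sigma^{-1}H)^{-1}$.
   Context: Empirical covariance $\Gamma_i=\frac1{J-1}\sum_j(v_i^{(j)}-\bar v_i)(v_i^{(j)}-\bar v_i)^\top$, $\bar v_i=\frac1J\sum_jv_i^{(j)}$; $\dagger$ denotes the Moore–Penrose pseudoinverse. *)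

theory Defs
  imports "HOL-Analysis.Analysis"
begin

definition pinv :: "real^'n^'m \<Rightarrow> real^'m^'n" where
  "pinv A = (THE X. A ** X ** A = A \<and> X ** A ** X = X \<and>
                    transpose (A ** X) = A ** X \<and> transpose (X ** A) = X ** A)"

definition outer :: "real^'n \<Rightarrow> real^'m \<Rightarrow> real^'m^'n" where
  "outer x y = (\<chi> i k. x $ i * y $ k)"

definition ens_mean :: "('j::finite \<Rightarrow> real^'d) \<Rightarrow> real^'d" where
  "ens_mean u = (1 / real CARD('j)) *\<^sub>R (\<Sum>j\<in>UNIV. u j)"

definition ens_cov :: "('j::finite \<Rightarrow> real^'d) \<Rightarrow> real^'d^'d" where
  "ens_cov u = (1 / (real CARD('j) - 1)) *\<^sub>R
      (\<Sum>j\<in>UNIV. outer (u j - ens_mean u) (u j - ens_mean u))"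

definition sym_pos_def_mat :: "real^'n^'n \<Rightarrow> bool" where
  "sym_pos_def_mat S \<longleftrightarrow> transpose S = S \<and> (\<forall>x. x \<noteq> 0 \<longrightarrow> x \<bullet> (S *v x) > 0)"

end

theory Submission
  imports Defs
begin


lemma adj: "((A::real^'n^'m) *v x) \<bullet> y = x \<bullet> (transpose A *v y)"
  by (metis dot_lmul_matrix inner_commute transpose_matrix_vector)

lemma matrix_lin: "linear (f::real^'n\<Rightarrow>real^'m) \<Longrightarrow> matrix f *v x = f x"
  using fun_cong[OF matrix_vector_mul(2)] by blast

lemma proj_exists:
  fixes S :: "(real^'k) set"
  assumes "subspace S"
  shows "\<exists>P::real^'k^'k. \<forall>x. P *v x \<in> S \<and> (\<forall>w\<in>S. (x - P *v x) \<bullet> w = 0)"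
proof -
  obtain B where BS: "B \<subseteq> S" and orth: "pairwise orthogonal B"
    and n1: "\<And>x. x \<in> B \<Longrightarrow> norm x = 1" and ind: "independent B" and sp: "span B = S"
    using orthonormal_basis_subspace[OF assms] by metis
  have fin: "finite B" using ind independent_imp_finite by blast
  define p where "p x = (\<Sum>b\<in>B. (b \<bullet> x) *\<^sub>R b)" for x :: "real^'k"
  have lin: "linear p"
  proof (rule linearI)
    fix x y show "p (x + y) = p x + p y"
      by (simp add: p_def inner_add_right scaleR_add_left sum.distrib)
  next
    fix c :: real and x show "p (c *\<^sub>R x) = c *\<^sub>R p x"
      by (simp add: p_def scaleR_sum_right)
  qed
  have pS: "p x \<in> S" for x
  proof -
    have "p x \<in> span B" unfolding p_def by (rule span_sum) (auto intro: span_scale span_base)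
    then show ?thesis using sp by simp
  qed
  have orthB: "(x - p x) \<bullet> b' = 0" if "b' \<in> B" for x b'
  proof -
    have "p x \<bullet> b' = (\<Sum>b\<in>B. (b \<bullet> x) * (b \<bullet> b'))"
      unfolding p_def by (simp add: inner_sum_left)
    also have "\<dots> = (b' \<bullet> x) * (b' \<bullet> b') + (\<Sum>b\<in>B-{b'}. (b \<bullet> x) * (b \<bullet> b'))"
      by (rule sum.remove[OF fin that])
    also have "(\<Sum>b\<in>B-{b'}. (b \<bullet> x) * (b \<bullet> b')) = 0"
      by (rule sum.neutral) (use orth that in \<open>auto simp: pairwise_def orthogonal_def\<close>)
    also have "b' \<bullet> b' = 1" using n1[OF that] by (simp add: power2_norm_eq_inner[symmetric])
    finally show ?thesis using inner_commute[of b' x] by (simp add: inner_diff_left)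
  qed
  show ?thesis
  proof (intro exI[of _ "matrix p"] allI conjI ballI)
    fix x w assume "w \<in> S"
    then have "w \<in> span B" using sp by simp
    then have "orthogonal (x - p x) w"
      by (rule orthogonal_to_span) (use orthB in \<open>auto simp: orthogonal_def\<close>)
    then show "(x - matrix p *v x) \<bullet> w = 0" by (simp add: matrix_lin[OF lin] orthogonal_def)
  next
    fix x show "matrix p *v x \<in> S" by (simp add: matrix_lin[OF lin] pS)
  qed
qed

lemma vec_eq_by_inner:
  fixes a b :: "real^'k"
  assumes "\<And>x. x \<bullet> a = x \<bullet> b" shows "a = b"
proof -
  have "(a - b) \<bullet> (a - b) = 0" using assms[of "a - b"] by (simp add: inner_diff_right)
  then show ?thesis by simp
qed

lemma proj_sym:
  fixes P :: "real^'k^'k"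
  assumes "\<And>x. P *v x \<in> S" "\<And>x w. w \<in> S \<Longrightarrow> (x - P *v x) \<bullet> w = 0"
  shows "transpose P = P"
proof -
  have key: "(P *v x) \<bullet> y = (P *v x) \<bullet> (P *v y)" for x y
  proof -
    have "(y - P *v y) \<bullet> (P *v x) = 0" using assms by blast
    then have "(P *v x) \<bullet> (y - P *v y) = 0" by (simp add: inner_commute)
    then show ?thesis by (simp add: inner_diff_right)
  qed
  have "transpose P *v y = P *v y" for y
  proof (rule vec_eq_by_inner)
    fix x
    have "x \<bullet> (transpose P *v y) = (P *v x) \<bullet> y" by (simp add: adj)
    also have "\<dots> = (P *v y) \<bullet> (P *v x)" using key by (simp add: inner_commute)
    also have "\<dots> = (P *v y) \<bullet> x" using key[of y x] by simp
    finally show "x \<bullet> (transpose P *v y) = x \<bullet> (P *v y)" by (simp add: inner_commute)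
  qed
  then show ?thesis by (simp add: matrix_eq)
qed

lemma proj_fix:
  fixes P :: "real^'k^'k"
  assumes "subspace S" "\<And>x. P *v x \<in> S" "\<And>x w. w \<in> S \<Longrightarrow> (x - P *v x) \<bullet> w = 0"
    and "w \<in> S"
  shows "P *v w = w"
proof -
  have "w - P *v w \<in> S" using assms by (simp add: subspace_diff)
  then have "(w - P *v w) \<bullet> (w - P *v w) = 0" using assms(3) by blast
  then show ?thesis by simp
qed


lemma mp_exists:
  fixes A :: "real^'n^'m"
  shows "\<exists>X. A ** X ** A = A \<and> X ** A ** X = X \<and>
                    transpose (A ** X) = A ** X \<and> transpose (X ** A) = X ** A"
proof -
  define V where "V = range (\<lambda>u. transpose A *v u)"
  define W where "W = range (\<lambda>u. A *v u)"
  have sV: "subspace V" unfolding V_def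
    by (rule real_vector.linear_subspace_image[OF matrix_vector_mul_linear subspace_UNIV])
  have sW: "subspace W" unfolding W_def
    by (rule real_vector.linear_subspace_image[OF matrix_vector_mul_linear subspace_UNIV])
  obtain PV :: "real^'n^'n" where PV: "\<And>x. PV *v x \<in> V" "\<And>x w. w \<in> V \<Longrightarrow> (x - PV *v x) \<bullet> w = 0"
    using proj_exists[OF sV] by blast
  obtain PW :: "real^'m^'m" where PW: "\<And>x. PW *v x \<in> W" "\<And>x w. w \<in> W \<Longrightarrow> (x - PW *v x) \<bullet> w = 0"
    using proj_exists[OF sW] by blast
  have AW: "A *v z \<in> W" for z unfolding W_def by blast
  have kerV: "A *v (PV *v z) = A *v z" for z
  proof -
    define d where "d = z - PV *v z"
    have "(A *v d) \<bullet> u = 0" for u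
    proof -
      have "transpose A *v u \<in> V" unfolding V_def by blast
      then have "d \<bullet> (transpose A *v u) = 0" using PV(2) d_def by blast
      then show ?thesis by (simp add: adj)
    qed
    then have "(A *v d) \<bullet> (A *v d) = 0" by blast
    then have "A *v d = 0" by simp
    then show ?thesis by (simp add: d_def matrix_vector_mult_diff_distrib)
  qed
  have spV: "span V = V" using sV by (simp add: span_eq_iff)
  have inj: "inj_on (\<lambda>x. A *v x) (span V)"
  proof (rule inj_onI)
    fix x y assume xy: "x \<in> span V" "y \<in> span V" "A *v x = A *v y"
    then have "x - y \<in> V" using spV sV by (simp add: subspace_diff)
    then obtain u where u: "x - y = transpose A *v u" unfolding V_def by blast
    have "(x - y) \<bullet> (x - y) = u \<bullet> (A *v (x - y))"
      by (metis u adj inner_commute transpose_transpose)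
    also have "\<dots> = 0" using xy(3) by (simp add: matrix_vector_mult_diff_distrib)
    finally show "x = y" by simp
  qed
  obtain g where g: "range g \<subseteq> span V" "linear g" "\<And>x. x \<in> span V \<Longrightarrow> g (A *v x) = x"
    using real_vector.linear_inj_on_left_inverse[OF matrix_vector_mul_linear inj] by blast
  have gV: "g x \<in> V" for x using g(1) spV by blast
  have gA: "g (A *v z) = PV *v z" for z
    using g(3)[of "PV *v z"] PV(1) spV kerV by simp
  have PWfix: "PW *v (A *v z) = A *v z" for z
    using proj_fix[OF sW PW AW] .
  define X where "X = matrix g ** PW"
  have Xv: "X *v b = g (PW *v b)" for b
    by (simp add: X_def matrix_vector_mul_assoc[symmetric] matrix_lin[OF g(2)])
  have c1: "A ** X ** A = A"
    unfolding matrix_eq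
    by (simp add: matrix_vector_mul_assoc[symmetric] Xv PWfix gA kerV)
  have AXPW: "A ** X = PW"
    unfolding matrix_eq
  proof
    fix b
    obtain u where u: "PW *v b = A *v u" using PW(1)[of b] unfolding W_def by blast
    show "(A ** X) *v b = PW *v b"
      by (simp add: matrix_vector_mul_assoc[symmetric] Xv u gA kerV)
  qed
  have XAPV: "X ** A = PV"
    unfolding matrix_eq
    by (simp add: matrix_vector_mul_assoc[symmetric] Xv PWfix gA)
  have c2: "X ** A ** X = X"
    unfolding matrix_eq
  proof
    fix b
    have "PV *v (g (PW *v b)) = g (PW *v b)" using proj_fix[OF sV PV gV] .
    then show "(X ** A ** X) *v b = X *v b"
      by (simp add: XAPV matrix_vector_mul_assoc[symmetric] Xv)
  qed
  show ?thesis
    using c1 c2 AXPW XAPV proj_sym[of PW W] proj_sym[of PV V] PW PV by metis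
qed

lemma mp_unique:
  fixes A :: "real^'n^'m"
  assumes "A ** X ** A = A" "X ** A ** X = X" "transpose (A ** X) = A ** X" "transpose (X ** A) = X ** A"
    and "A ** Y ** A = A" "Y ** A ** Y = Y" "transpose (A ** Y) = A ** Y" "transpose (Y ** A) = Y ** A"
  shows "X = Y"
proof -
  have AX: "A ** X = A ** Y"
  proof -
    have "A ** X = transpose (A ** X)" using assms by simp
    also have "\<dots> = transpose X ** transpose (A ** Y ** A)" using assms by (simp add: matrix_transpose_mul)
    also have "\<dots> = transpose (A ** Y ** (A ** X))" by (simp add: matrix_transpose_mul matrix_mul_assoc)
    also have "\<dots> = transpose (A ** X) ** transpose (A ** Y)" by (simp add: matrix_transpose_mul matrix_mul_assoc)
    also have "\<dots> = A ** X ** (A ** Y)" using assms by simp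
    also have "\<dots> = A ** Y" using assms by (simp add: matrix_mul_assoc)
    finally show ?thesis .
  qed
  have XA: "X ** A = Y ** A"
  proof -
    have "X ** A = transpose (X ** A)" using assms by simp
    also have "\<dots> = transpose (A ** Y ** A) ** transpose X" using assms by (simp add: matrix_transpose_mul)
    also have "\<dots> = transpose ((X ** A) ** (Y ** A))" by (simp add: matrix_transpose_mul matrix_mul_assoc)
    also have "\<dots> = transpose (Y ** A) ** transpose (X ** A)" by (simp add: matrix_transpose_mul)
    also have "\<dots> = Y ** A ** (X ** A)" using assms by simp
    also have "\<dots> = Y ** A" by (metis assms(1) matrix_mul_assoc)
    finally show ?thesis .
  qed
  have "X = X ** A ** X" using assms by simp
  also have "\<dots> = X ** (A ** Y)" using AX by (metis matrix_mul_assoc)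
  also have "\<dots> = Y ** A ** Y" using XA by (metis matrix_mul_assoc)
  also have "\<dots> = Y" using assms by simp
  finally show ?thesis .
qed

lemma pinv_prop:
  fixes A :: "real^'n^'m"
  shows "A ** pinv A ** A = A"
proof -
  let ?P = "\<lambda>X. A ** X ** A = A \<and> X ** A ** X = X \<and>
                    transpose (A ** X) = A ** X \<and> transpose (X ** A) = X ** A"
  have "\<exists>!X. ?P X" using mp_exists mp_unique by metis
  from theI'[OF this] show ?thesis unfolding pinv_def by blast
qed



declare transpose_matrix_vector[simp del]

lemma inv_of_ker:
  fixes A :: "real^'n^'n"
  assumes "\<And>x. A *v x = 0 \<Longrightarrow> x = 0" shows "invertible A"
  using assms by (metis invertible_left_inverse matrix_left_invertible_ker)

lemma minv:
  fixes A :: "real^'n^'n"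
  assumes "invertible A" shows "A ** matrix_inv A = mat 1" "matrix_inv A ** A = mat 1"
proof -
  have "A ** matrix_inv A = mat 1 \<and> matrix_inv A ** A = mat 1"
    using assms unfolding matrix_inv_def invertible_def by (rule someI_ex)
  then show "A ** matrix_inv A = mat 1" "matrix_inv A ** A = mat 1" by auto
qed

lemma outer_mv: "outer a b *v x = (b \<bullet> x) *\<^sub>R (a::real^'n)"
  by (simp add: outer_def matrix_vector_mult_def inner_vec_def vec_eq_iff sum_distrib_left mult_ac)

lemma sum_mv: "(\<Sum>j\<in>S. M j) *v x = (\<Sum>j\<in>S. M j *v (x::real^'n))"
  by (induction S rule: infinite_finite_induct) (simp_all add: matrix_vector_mult_add_rdistrib)

lemma cov_psd:
  fixes u :: "'j::finite \<Rightarrow> real^'d"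
  assumes "CARD('j) \<ge> 2"
  shows "x \<bullet> (ens_cov u *v x) \<ge> 0"
proof -
  define c where "c = 1 / (real CARD('j) - 1)"
  have c: "c \<ge> 0" using assms by (simp add: c_def)
  have "x \<bullet> (ens_cov u *v x) = c * (\<Sum>j\<in>UNIV. ((u j - ens_mean u) \<bullet> x) * ((u j - ens_mean u) \<bullet> x))"
    unfolding ens_cov_def c_def[symmetric]
    by (simp add: scaleR_matrix_vector_assoc[symmetric] sum_mv outer_mv inner_sum_right inner_commute)
  also have "\<dots> \<ge> 0" by (rule mult_nonneg_nonneg[OF c sum_nonneg]) simp
  finally show ?thesis .
qed

lemma transpose_diff: "transpose (A - B) = transpose A - transpose (B::real^'n^'m)"
  by (simp add: transpose_def vec_eq_iff)

lemma transpose_add: "transpose (A + B) = transpose A + transpose (B::real^'n^'m)"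
  by (simp add: transpose_def vec_eq_iff)

lemma matrix_add_rdistrib: "((A::real^'n^'m) + B) ** C = A ** C + B ** C"
  by (vector matrix_matrix_mult_def sum.distrib distrib_right)

lemma transpose_zero_mat: "transpose (0::real^'n^'m) = 0"
  by (simp add: transpose_def vec_eq_iff)

lemma adj2: "x \<bullet> ((A::real^'n^'m) *v y) = (transpose A *v x) \<bullet> y"
  by (metis adj inner_commute)

theorem proposition3p12:
  fixes H :: "real^'d^'n" and \<Sigma> :: "real^'n^'n" and y :: "real^'n"
    and v :: "nat \<Rightarrow> 'j::finite \<Rightarrow> real^'d"
  assumes J2: "CARD('j) \<ge> 2"
    and SPD: "sym_pos_def_mat \<Sigma>"
    and EKI: "\<And>i j. v (Suc i) j = v i j +
        (ens_cov (v i) ** transpose H **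
           matrix_inv (H ** ens_cov (v i) ** transpose H + \<Sigma>)) *v (y - H *v v i j)"
  shows "\<forall>i j.
    (let vstar = (pinv (transpose H ** matrix_inv \<Sigma> ** H) ** transpose H ** matrix_inv \<Sigma>) *v y;
         M = matrix_inv (mat 1 + ens_cov (v i) ** transpose H ** matrix_inv \<Sigma> ** H)
     in v (Suc i) j - vstar = M *v (v i j - vstar))"
proof (intro allI)
  fix i j
  define Si where "Si = matrix_inv \<Sigma>"
  define C where "C = ens_cov (v i)"
  define A where "A = transpose H ** Si ** H"
  define X where "X = pinv A"
  define S where "S = H ** C ** transpose H + \<Sigma>"
  define N where "N = mat 1 + C ** transpose H ** Si ** H"
  define M where "M = matrix_inv N"
  have Ssym: "transpose \<Sigma> = \<Sigma>" and Spd: "\<And>x. x \<noteq> 0 \<Longrightarrow> x \<bullet> (\<Sigma> *v x) > 0"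
    using SPD unfolding sym_pos_def_mat_def by auto
  have Sge: "x \<bullet> (\<Sigma> *v x) \<ge> 0" for x
    using Spd[of x] by (cases "x = 0") auto
  have invS: "invertible \<Sigma>"
    by (rule inv_of_ker) (metis Spd inner_zero_right less_irrefl)
  have SSi: "\<Sigma> ** Si = mat 1" "Si ** \<Sigma> = mat 1" using minv[OF invS] by (auto simp: Si_def)
  have Sisym: "transpose Si = Si"
  proof -
    have "transpose Si = transpose Si ** (\<Sigma> ** Si)" using SSi by simp
    also have "\<dots> = transpose (\<Sigma> ** Si) ** Si" using Ssym by (simp add: matrix_transpose_mul matrix_mul_assoc)
    also have "\<dots> = Si" using SSi by simp
    finally show ?thesis .
  qed
  have Sipos: "x \<bullet> (Si *v x) \<ge> 0 \<and> (x \<bullet> (Si *v x) = 0 \<longrightarrow> x = 0)" for x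
  proof -
    define z where "z = Si *v x"
    have xz: "x = \<Sigma> *v z" using SSi by (simp add: z_def matrix_vector_mul_assoc)
    have e: "x \<bullet> (Si *v x) = z \<bullet> (\<Sigma> *v z)" using xz z_def by (simp add: inner_commute)
    show ?thesis using Spd[of z] Sge[of z] xz e by (cases "z = 0") auto
  qed
  have Cpsd: "x \<bullet> (C *v x) \<ge> 0" for x unfolding C_def using cov_psd[OF J2] .
  have invSS: "invertible S"
  proof (rule inv_of_ker)
    fix x assume "S *v x = 0"
    then have "x \<bullet> (S *v x) = 0" by simp
    moreover have "x \<bullet> (S *v x) = (transpose H *v x) \<bullet> (C *v (transpose H *v x)) + x \<bullet> (\<Sigma> *v x)"
      by (simp add: S_def matrix_vector_mult_add_rdistrib inner_add_right matrix_vector_mul_assoc[symmetric] adj2)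
    ultimately have "x \<bullet> (\<Sigma> *v x) = 0" using Cpsd[of "transpose H *v x"] Sge[of x] by linarith
    then show "x = 0" using Spd[of x] by (cases "x = 0") auto
  qed
  have Av: "A *v z = transpose H *v (Si *v (H *v z))" for z
    by (simp add: A_def matrix_vector_mul_assoc matrix_mul_assoc)
  have Nv: "N *v z = z + C *v (A *v z)" for z
    by (simp add: N_def Av matrix_vector_mult_add_rdistrib matrix_vector_mul_assoc matrix_mul_assoc)
  have xAx: "x \<bullet> (A *v x) = (H *v x) \<bullet> (Si *v (H *v x))" for x
    by (simp add: Av adj2)
  have invN: "invertible N"
  proof (rule inv_of_ker)
    fix x assume "N *v x = 0"
    then have x: "x = - (C *v (A *v x))" using Nv by (simp add: add_eq_0_iff)
    have "x \<bullet> (A *v x) = - ((A *v x) \<bullet> (C *v (A *v x)))"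
      by (subst x) (simp add: inner_commute)
    then have "x \<bullet> (A *v x) \<le> 0" using Cpsd[of "A *v x"] by linarith
    then have "H *v x = 0" using xAx[of x] Sipos[of "H *v x"] by linarith
    then show "x = 0" using x Av by simp
  qed
  have MN: "M ** N = mat 1" "N ** M = mat 1" using minv[OF invN] by (auto simp: M_def)
  have push: "N ** (C ** transpose H) = C ** transpose H ** Si ** S"
  proof -
    have CS: "C ** transpose H ** Si ** \<Sigma> = C ** transpose H"
      by (metis SSi(2) matrix_mul_assoc matrix_mul_rid)
    have "N ** (C ** transpose H) = C ** transpose H + C ** transpose H ** Si ** H ** C ** transpose H"
      by (simp add: N_def matrix_add_rdistrib matrix_mul_assoc)
    also have "\<dots> = C ** transpose H ** Si ** (H ** C ** transpose H) + C ** transpose H ** Si ** \<Sigma>"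
      by (simp add: CS matrix_mul_assoc add.commute)
    also have "\<dots> = C ** transpose H ** Si ** S"
      by (simp add: S_def matrix_add_ldistrib)
    finally show ?thesis .
  qed
  have Kmat: "C ** transpose H ** matrix_inv S = M ** C ** transpose H ** Si"
  proof -
    have "C ** transpose H ** matrix_inv S = M ** N ** (C ** transpose H) ** matrix_inv S"
      using MN by (metis matrix_mul_assoc matrix_mul_lid)
    also have "\<dots> = M ** (C ** transpose H ** Si ** S) ** matrix_inv S"
      using push by (metis matrix_mul_assoc)
    also have "\<dots> = M ** C ** transpose H ** Si"
      using minv[OF invSS] by (metis matrix_mul_assoc matrix_mul_rid)
    finally show ?thesis .
  qed
  have Asym: "transpose A = A"
    by (simp add: A_def matrix_transpose_mul Sisym matrix_mul_assoc)
  have AXA: "A ** X ** A = A" unfolding X_def by (rule pinv_prop)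
  have range: "transpose H *v w = A *v (X *v (transpose H *v w))" for w
  proof -
    define E where "E = transpose H - A ** X ** transpose H"
    have ET: "transpose E *v u = 0" for u
    proof -
      define q where "q = u - transpose X *v (A *v u)"
      have "transpose E = H - H ** transpose X ** A"
        by (simp add: E_def transpose_diff matrix_transpose_mul Asym matrix_mul_assoc)
      then have Eq: "transpose E *v u = H *v q"
        by (simp add: q_def matrix_vector_mult_diff_rdistrib matrix_vector_mult_diff_distrib matrix_vector_mul_assoc matrix_mul_assoc)
      have AXTA: "A ** transpose X ** A = A"
        by (metis AXA Asym matrix_transpose_mul matrix_mul_assoc)
      have "A *v q = 0"
        by (simp add: q_def matrix_vector_mult_diff_distrib matrix_vector_mul_assoc matrix_mul_assoc AXTA)
      then have "q \<bullet> (A *v q) = 0" by simp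
      then have "H *v q = 0" using xAx[of q] Sipos[of "H *v q"] by simp
      then show ?thesis using Eq by simp
    qed
    have "transpose E = 0" unfolding matrix_eq using ET by simp
    then have "E = 0" by (metis transpose_transpose transpose_zero_mat)
    then have "transpose H = A ** X ** transpose H" by (simp add: E_def)
    then show ?thesis by (metis matrix_vector_mul_assoc)
  qed
  define vs where "vs = X *v (transpose H *v (Si *v y))"
  have vs_eq: "(pinv (transpose H ** matrix_inv \<Sigma> ** H) ** transpose H ** matrix_inv \<Sigma>) *v y = vs"
    by (simp add: vs_def X_def A_def Si_def matrix_vector_mul_assoc matrix_mul_assoc)
  have Kv: "(C ** transpose H ** matrix_inv S) *v z = M *v (C *v (transpose H *v (Si *v z)))" for z
    by (simp add: Kmat matrix_vector_mul_assoc matrix_mul_assoc)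
  define p where "p = v i j - vs"
  have Ky: "transpose H *v (Si *v y) = A *v vs" using range[of "Si *v y"] by (simp add: vs_def)
  have pM: "p = M *v p + M *v (C *v (A *v p))"
  proof -
    have "p = M *v (N *v p)" using MN by (simp add: matrix_vector_mul_assoc)
    then show ?thesis by (simp add: Nv matrix_vector_right_distrib)
  qed
  have "v (Suc i) j - vs = p + M *v (C *v (A *v vs)) - M *v (C *v (A *v v i j))"
    by (simp add: EKI[of i j] C_def[symmetric] S_def[symmetric] Kv Ky matrix_vector_mult_diff_distrib
        p_def Av[symmetric])
  also have "\<dots> = p - M *v (C *v (A *v p))"
    by (simp add: p_def matrix_vector_mult_diff_distrib)
  also have "\<dots> = M *v p" using pM by (simp add: algebra_simps)
  finally have "v (Suc i) j - vs = M *v (v i j - vs)" by (simp add: p_def)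
  then show "let vstar = (pinv (transpose H ** matrix_inv \<Sigma> ** H) ** transpose H ** matrix_inv \<Sigma>) *v y;
         M = matrix_inv (mat 1 + ens_cov (v i) ** transpose H ** matrix_inv \<Sigma> ** H)
     in v (Suc i) j - vstar = M *v (v i j - vstar)"
    by (simp add: vs_eq Let_def M_def N_def C_def Si_def)
qed

end
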